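(* Let $A$ be a finite alphabet. Every infinite LSP word over $A$ is $S_{\rm bLSP}(A)$-adic.
   Context: A finite word $u$ is a left special factor of a word $w$ if there are distinct letters $x\neq y$ with $xu$ and $yu$ factors of $w$. A word is LSP if every left special factor of it is a prefix of it. A bLSP morphism on $A$ is an endomorphism $f$ of $A^*$ such that there is a letter $\alpha$ with $f(\alpha)=\alpha$ and, for every letter $\beta\neq\alpha$, there is a letter $\gamma$ with $f(\beta)=f(\gamma)\beta$; $S_{\rm bLSP}(A)$ is the set of all such morphisms. For a set $S$ of morphisms, an infinite word $\mathbf{w}$ is $S$-adic if there exist $(f_n)_{n\ge1}$ in $S$ and infinite words $(\mathbf{w}_n)_{n\ge1}$ with $\mathbf{w}_1=\mathbf{w}$ and $\mathbf{w}_n=f_n(\mathbf{w}_{n+1})$ for all $n\ge1$. *)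

theory Defs
  imports Main
begin

text \<open>Infinite words over an alphabet are functions nat => 'a; finite words are lists.
A morphism of A* is given by its letter images f :: 'a => 'a list.\<close>

definition inf_word_over :: "'a set \<Rightarrow> (nat \<Rightarrow> 'a) \<Rightarrow> bool" where
  "inf_word_over A w \<longleftrightarrow> (\<forall>n. w n \<in> A)"

definition factor :: "'a list \<Rightarrow> (nat \<Rightarrow> 'a) \<Rightarrow> bool" where
  "factor u w \<longleftrightarrow> (\<exists>i. u = map w [i..<i + length u])"

definition left_special :: "'a list \<Rightarrow> (nat \<Rightarrow> 'a) \<Rightarrow> bool" where
  "left_special u w \<longleftrightarrow> (\<exists>x y. x \<noteq> y \<and> factor (x # u) w \<and> factor (y # u) w)"

definition is_prefix :: "'a list \<Rightarrow> (nat \<Rightarrow> 'a) \<Rightarrow> bool" where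
  "is_prefix u w \<longleftrightarrow> u = map w [0..<length u]"

definition LSP :: "(nat \<Rightarrow> 'a) \<Rightarrow> bool" where
  "LSP w \<longleftrightarrow> (\<forall>u. left_special u w \<longrightarrow> is_prefix u w)"

definition img_prefix :: "('a \<Rightarrow> 'a list) \<Rightarrow> (nat \<Rightarrow> 'a) \<Rightarrow> nat \<Rightarrow> 'a list" where
  "img_prefix f v n = concat (map f (map v [0..<n]))"

definition inf_image :: "('a \<Rightarrow> 'a list) \<Rightarrow> (nat \<Rightarrow> 'a) \<Rightarrow> (nat \<Rightarrow> 'a) \<Rightarrow> bool" where
  "inf_image f v w \<longleftrightarrow>
     (\<forall>n. \<forall>i < length (img_prefix f v n). w i = img_prefix f v n ! i) \<and>
     (\<forall>m. \<exists>n. m < length (img_prefix f v n))"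

definition S_bLSP :: "'a set \<Rightarrow> ('a \<Rightarrow> 'a list) set" where
  "S_bLSP A = {f. (\<forall>a\<in>A. set (f a) \<subseteq> A) \<and>
      (\<exists>\<alpha>\<in>A. f \<alpha> = [\<alpha>] \<and> (\<forall>\<beta>\<in>A. \<beta> \<noteq> \<alpha> \<longrightarrow> (\<exists>\<gamma>\<in>A. f \<beta> = f \<gamma> @ [\<beta>])))}"

text \<open>S-adic (sequences indexed from 0 instead of 1).\<close>
definition S_adic :: "'a set \<Rightarrow> ('a \<Rightarrow> 'a list) set \<Rightarrow> (nat \<Rightarrow> 'a) \<Rightarrow> bool" where
  "S_adic A S w \<longleftrightarrow> (\<exists>fs ws. ws 0 = w \<and>
      (\<forall>n. fs n \<in> S \<and> inf_word_over A (ws n) \<and> inf_image (fs n) (ws (Suc n)) (ws n)))"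

end

theory Submission imports Defs
begin

fun blk :: "(nat \<Rightarrow> 'a) \<Rightarrow> nat \<Rightarrow> 'a list" where
  "blk w 0 = [w 0]"
| "blk w (Suc j) = (if w (Suc j) = w 0 then [w 0] else blk w j @ [w (Suc j)])"

lemma blk_ne: "blk w j \<noteq> []"
  by (cases j) auto

lemma blk_last: "last (blk w j) = w j"
  by (cases j) auto

lemma blk_hd: "hd (blk w j) = w 0"
  by (induction j) (auto simp: blk_ne)

lemma blk_tl: "w 0 \<notin> set (tl (blk w j))"
  by (induction j) (auto simp: blk_ne tl_append split: list.splits)

lemma blk_set: "set (blk w j) \<subseteq> range w"
  by (induction j) auto

lemma LSP_pred:
  assumes "LSP w" "w (Suc i) = w (Suc j)" "w (Suc i) \<noteq> w 0"
  shows "w i = w j"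
proof (rule ccontr)
  assume ne: "w i \<noteq> w j"
  have "factor [w i, w (Suc i)] w" unfolding factor_def
    by (rule exI[of _ i]) (simp add: upt_conv_Cons)
  moreover have "factor [w j, w (Suc i)] w" unfolding factor_def
    by (rule exI[of _ j]) (simp add: upt_conv_Cons assms(2))
  ultimately have "left_special [w (Suc i)] w" unfolding left_special_def using ne by blast
  then have "is_prefix [w (Suc i)] w" using assms(1) unfolding LSP_def by blast
  then show False using assms(3) unfolding is_prefix_def by simp
qed

lemma blk_welldef:
  assumes "LSP w" shows "w j = w j' \<Longrightarrow> blk w j = blk w j'"
proof (induction j arbitrary: j')
  case 0
  then show ?case by (cases j') auto
next
  case (Suc j)
  show ?case
  proof (cases "w (Suc j) = w 0")
    case True
    then show ?thesis using Suc.prems by (cases j') auto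
  next
    case False
    then obtain j'' where j': "j' = Suc j''" using Suc.prems by (cases j') auto
    have "w j = w j''" using LSP_pred[OF assms, of j j''] Suc.prems False j' by simp
    then show ?thesis using Suc.IH j' Suc.prems False by simp
  qed
qed

lemma blk_range:
  assumes "a \<le> j" "w a = w 0" "\<And>k. a < k \<Longrightarrow> k \<le> j \<Longrightarrow> w k \<noteq> w 0"
  shows "blk w j = map w [a..<Suc j]"
  using assms
proof (induction j)
  case 0
  then show ?case by simp
next
  case (Suc j)
  show ?case
  proof (cases "a = Suc j")
    case True
    then show ?thesis using Suc.prems by (cases a) auto
  next
    case False
    then have "a \<le> j" using Suc.prems by simp
    then show ?thesis using Suc.IH Suc.prems by auto
  qed
qed

lemma blk_grow:
  assumes "\<And>k. i < k \<Longrightarrow> w k \<noteq> w 0"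
  shows "length (blk w (i + d)) \<ge> Suc d"
  using assms by (induction d) (auto simp: blk_ne Suc_le_eq)


definition F :: "(nat \<Rightarrow> 'a) \<Rightarrow> 'a \<Rightarrow> 'a list" where
  "F w a = (if \<exists>j. w j = a then blk w (SOME j. w j = a) else [w 0, a])"

lemma F_w: assumes "LSP w" shows "F w (w j) = blk w j"
proof -
  have "w (SOME j'. w j' = w j) = w j" by (rule someI[of _ j]) simp
  then have "blk w (SOME j'. w j' = w j) = blk w j" by (rule blk_welldef[OF assms])
  then show ?thesis unfolding F_def by auto
qed

lemma inf_alpha:
  assumes "finite A" "inf_word_over A w" "LSP w"
  shows "\<exists>k>i. w k = w 0"
proof (rule ccontr)
  assume "\<not> ?thesis"
  then have h: "\<And>k. i < k \<Longrightarrow> w k \<noteq> w 0" by auto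
  define M where "M = Max ((\<lambda>a. length (F w a)) ` A)"
  have "length (blk w (i + M)) \<ge> Suc M" by (rule blk_grow) (use h in blast)
  moreover have "length (blk w (i + M)) = length (F w (w (i + M)))" using F_w[OF assms(3)] by simp
  moreover have "length (F w (w (i + M))) \<le> M" unfolding M_def
    using assms(1,2) unfolding inf_word_over_def by (intro Max_ge) auto
  ultimately show False by simp
qed

fun apos :: "(nat \<Rightarrow> 'a) \<Rightarrow> nat \<Rightarrow> nat" where
  "apos w 0 = 0"
| "apos w (Suc n) = (LEAST k. apos w n < k \<and> w k = w 0)"

declare apos.simps(2)[simp del]

definition wd :: "(nat \<Rightarrow> 'a) \<Rightarrow> nat \<Rightarrow> 'a" where
  "wd w n = w (apos w (Suc n) - 1)"

lemma apos_props:
  assumes H: "\<And>i. \<exists>k>i. w k = w 0"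
  shows "apos w n < apos w (Suc n) \<and> w (apos w (Suc n)) = w 0"
proof -
  obtain k where "apos w n < k \<and> w k = w 0" using H by blast
  then have "apos w n < apos w (Suc n) \<and> w (apos w (Suc n)) = w 0"
    unfolding apos.simps(2) by (rule LeastI)
  then show ?thesis .
qed

lemma apos_val:
  assumes H: "\<And>i. \<exists>k>i. w k = w 0"
  shows "w (apos w n) = w 0"
  using apos_props[OF H] by (cases n) auto

lemma apos_gap:
  assumes "apos w n < k" "k < apos w (Suc n)"
  shows "w k \<noteq> w 0"
  using assms not_less_Least[of k "\<lambda>k. apos w n < k \<and> w k = w 0"] unfolding apos.simps(2) by auto

lemma apos_mono:
  assumes H: "\<And>i. \<exists>k>i. w k = w 0"
  shows "strict_mono (apos w)"
  unfolding strict_mono_Suc_iff using apos_props[OF H] by blast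

lemma F_wd:
  assumes "LSP w" and H: "\<And>i. \<exists>k>i. w k = w 0"
  shows "F w (wd w n) = map w [apos w n..<apos w (Suc n)]"
proof -
  have lt: "apos w n < apos w (Suc n)" using apos_props[OF H] by blast
  have "F w (wd w n) = blk w (apos w (Suc n) - 1)" unfolding wd_def by (rule F_w[OF assms(1)])
  also have "\<dots> = map w [apos w n..<Suc (apos w (Suc n) - 1)]"
  proof (rule blk_range)
    show "apos w n \<le> apos w (Suc n) - 1" using lt by simp
    show "w (apos w n) = w 0" by (rule apos_val[OF H])
    fix k assume "apos w n < k" "k \<le> apos w (Suc n) - 1"
    then show "w k \<noteq> w 0" using apos_gap[of w n k] lt by simp
  qed
  also have "Suc (apos w (Suc n) - 1) = apos w (Suc n)" using lt by simp
  finally show ?thesis .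
qed

lemma concat_wd:
  assumes "LSP w" and H: "\<And>i. \<exists>k>i. w k = w 0"
  shows "map w [apos w n..<apos w (n + m)] = concat (map (F w) (map (wd w) [n..<n + m]))"
proof (induction m)
  case 0
  then show ?case by simp
next
  case (Suc m)
  have le: "apos w n \<le> apos w (n + m)" using strict_mono_less_eq[OF apos_mono[OF H]] by simp
  have lt: "apos w (n + m) < apos w (Suc (n + m))" using apos_props[OF H] by blast
  have "[apos w n..<apos w (n + Suc m)] = [apos w n..<apos w (n + m)] @ [apos w (n+m)..<apos w (Suc (n + m))]"
    using le lt upt_add_eq_append[of "apos w n" "apos w (n+m)" "apos w (Suc (n + m)) - apos w (n+m)"] by simp
  then show ?case using Suc.IH F_wd[OF assms, of "n+m"] by simp
qed

lemma img_wd: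
  assumes "LSP w" and H: "\<And>i. \<exists>k>i. w k = w 0"
  shows "img_prefix (F w) (wd w) n = map w [0..<apos w n]"
  using concat_wd[OF assms, of 0 n] unfolding img_prefix_def by simp

lemma inf_image_wd:
  assumes "LSP w" and H: "\<And>i. \<exists>k>i. w k = w 0"
  shows "inf_image (F w) (wd w) w"
  unfolding inf_image_def img_wd[OF assms]
proof (intro conjI allI)
  fix m
  have "m \<le> apos w m" using strict_mono_imp_increasing[OF apos_mono[OF H]] by simp
  also have "\<dots> < apos w (Suc m)" using apos_props[OF H] by blast
  finally show "\<exists>n. m < length (map w [0..<apos w n])" by (intro exI[of _ "Suc m"]) simp
qed auto


lemma F_props: "F w a \<noteq> [] \<and> hd (F w a) = w 0 \<and> last (F w a) = a \<and> w 0 \<notin> set (tl (F w a))"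
proof (cases "\<exists>j. w j = a")
  case True
  then have "w (SOME j. w j = a) = a" by (rule someI_ex)
  moreover have "F w a = blk w (SOME j. w j = a)" unfolding F_def using True by simp
  ultimately show ?thesis using blk_ne[of w] blk_hd[of w] blk_last[of w] blk_tl[of w] by simp
next
  case False
  then have "a \<noteq> w 0" by auto
  then show ?thesis unfolding F_def using False by auto
qed

lemma F_S:
  assumes "inf_word_over A w" "LSP w"
  shows "F w \<in> S_bLSP A"
proof -
  have wA: "\<And>n. w n \<in> A" using assms(1) unfolding inf_word_over_def by blast
  have F0: "F w (w 0) = [w 0]" using F_w[OF assms(2), of 0] by simp
  have 1: "\<forall>a\<in>A. set (F w a) \<subseteq> A"
  proof
    fix a assume a: "a \<in> A"
    show "set (F w a) \<subseteq> A"
    proof (cases "\<exists>j. w j = a")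
      case True
      then obtain j where "w j = a" by blast
      then have "F w a = blk w j" using F_w[OF assms(2), of j] by simp
      then show ?thesis using blk_set[of w j] wA by auto
    next
      case False
      then show ?thesis unfolding F_def using a wA by auto
    qed
  qed
  have 2: "\<forall>\<beta>\<in>A. \<beta> \<noteq> w 0 \<longrightarrow> (\<exists>\<gamma>\<in>A. F w \<beta> = F w \<gamma> @ [\<beta>])"
  proof (intro ballI impI)
    fix b assume b: "b \<in> A" "b \<noteq> w 0"
    show "\<exists>\<gamma>\<in>A. F w b = F w \<gamma> @ [b]"
    proof (cases "\<exists>j. w j = b")
      case True
      then obtain j where j: "w j = b" by blast
      then obtain j'' where j'': "j = Suc j''" using b by (cases j) auto
      have "F w b = blk w (Suc j'')" using F_w[OF assms(2), of j] j j'' by simp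
      also have "\<dots> = blk w j'' @ [b]" using j j'' b by simp
      also have "\<dots> = F w (w j'') @ [b]" using F_w[OF assms(2), of j''] by simp
      finally show ?thesis using wA by blast
    next
      case False
      then have "F w b = F w (w 0) @ [b]" unfolding F0 unfolding F_def by auto
      then show ?thesis using wA by blast
    qed
  qed
  show ?thesis unfolding S_bLSP_def using 1 2 F0 wA by blast
qed

lemma hd_concat_F: "hd (concat (map (F w) v) @ [w 0]) = w 0"
  by (cases v) (auto simp: F_props)

lemma prefix_lemma:
  assumes "LSP w" and H: "\<And>i. \<exists>k>i. w k = w 0"
  shows "(\<And>k. k < length (concat (map (F w) v)) + 1 \<Longrightarrow>
           w (apos w n + k) = (concat (map (F w) v) @ [w 0]) ! k)
         \<Longrightarrow> v = map (wd w) [n..<n + length v]"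
proof (induction v arbitrary: n)
  case Nil
  then show ?case by simp
next
  case (Cons a v)
  define L where "L = length (F w a)"
  define C where "C = concat (map (F w) v)"
  have Lpos: "0 < L" unfolding L_def using F_props[of w a] by simp
  have hyp: "\<And>k. k < L + length C + 1 \<Longrightarrow> w (apos w n + k) = (F w a @ C @ [w 0]) ! k"
    using Cons.prems unfolding L_def C_def by simp
  have first: "\<And>k. k < L \<Longrightarrow> w (apos w n + k) = F w a ! k"
    using hyp by (simp add: L_def nth_append)
  have atL: "w (apos w n + L) = w 0"
  proof -
    have "w (apos w n + L) = (F w a @ C @ [w 0]) ! L" using hyp by simp
    also have "\<dots> = (C @ [w 0]) ! 0" by (simp add: L_def nth_append)
    also have "\<dots> = hd (C @ [w 0])" by (simp add: hd_conv_nth)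
    also have "\<dots> = w 0" unfolding C_def by (rule hd_concat_F)
    finally show ?thesis .
  qed
  have gap: "\<And>k. 0 < k \<Longrightarrow> k < L \<Longrightarrow> w (apos w n + k) \<noteq> w 0"
  proof -
    fix k assume k: "0 < k" "k < L"
    have kl: "k - 1 < length (tl (F w a))" using k unfolding L_def by simp
    have "F w a ! k = tl (F w a) ! (k - 1)" using k nth_tl[OF kl] by simp
    moreover note kl
    ultimately have "F w a ! k \<in> set (tl (F w a))" by simp
    then show "w (apos w n + k) \<noteq> w 0" using first[OF k(2)] F_props[of w a] by auto
  qed
  have aposS: "apos w (Suc n) = apos w n + L"
    unfolding apos.simps(2)
  proof (rule Least_equality)
    show "apos w n < apos w n + L \<and> w (apos w n + L) = w 0" using Lpos atL by simp
    fix y assume y: "apos w n < y \<and> w y = w 0"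
    show "apos w n + L \<le> y"
    proof (rule ccontr)
      assume "\<not> ?thesis"
      then have "y - apos w n < L" "0 < y - apos w n" using y by auto
      then show False using gap[of "y - apos w n"] y by simp
    qed
  qed
  have "F w a = map w [apos w n..<apos w n + L]"
    by (rule nth_equalityI) (auto simp: L_def first)
  also have "\<dots> = F w (wd w n)" using F_wd[OF assms, of n] aposS by simp
  finally have "last (F w a) = last (F w (wd w n))" by simp
  then have a: "a = wd w n" using F_props by metis
  have "\<And>k. k < length C + 1 \<Longrightarrow> w (apos w (Suc n) + k) = (C @ [w 0]) ! k"
  proof -
    fix k assume "k < length C + 1"
    then have "w (apos w n + (L + k)) = (F w a @ C @ [w 0]) ! (L + k)" using hyp by simp
    then show "w (apos w (Suc n) + k) = (C @ [w 0]) ! k" using aposS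
      by (simp add: L_def nth_append add.assoc)
  qed
  then have vv: "v = map (wd w) [Suc n..<Suc n + length v]" using Cons.IH unfolding C_def by blast
  have eq: "[n..<n + length (a # v)] = n # [Suc n..<Suc n + length v]" by (simp add: upt_conv_Cons del: upt_Suc)
  show ?case unfolding eq by (metis a vv list.map(2))
qed

lemma factor_lift:
  assumes "LSP w" and H: "\<And>i. \<exists>k>i. w k = w 0"
    and xu: "x # u = map (wd w) [i..<i + length (x # u)]"
  shows "factor (x # (concat (map (F w) u) @ [w 0])) w"
proof -
  define C where "C = concat (map (F w) u)"
  define p where "p = apos w (Suc i) - 1"
  define q where "q = apos w (Suc i + length u)"
  have "[i..<i + length (x # u)] = i # [Suc i..<Suc i + length u]" by (simp add: upt_conv_Cons del: upt_Suc)
  then have "x # u = wd w i # map (wd w) [Suc i..<Suc i + length u]" using xu by (metis list.map(2))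
  then have x: "x = wd w i" and u: "u = map (wd w) [Suc i..<Suc i + length u]" by simp_all
  have C0: "C = concat (map (F w) (map (wd w) [Suc i..<Suc i + length u]))"
    unfolding C_def by (rule arg_cong[where f="\<lambda>l. concat (map (F w) l)"]) (rule u)
  have C: "C = map w [apos w (Suc i)..<q]"
    unfolding C0 q_def using concat_wd[OF assms(1,2), of "Suc i" "length u"] by (simp del: upt_Suc)
  have pos: "0 < apos w (Suc i)" using apos_props[OF H, of i] by simp
  have le: "apos w (Suc i) \<le> q" unfolding q_def using strict_mono_less_eq[OF apos_mono[OF H]] by simp
  have wq: "w q = w 0" unfolding q_def by (rule apos_val[OF H])
  have wp: "w p = x" unfolding p_def x wd_def ..
  have "map w [p..<p + length (x # (C @ [w 0]))] = map w [p..<Suc q]"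
    using C pos le unfolding p_def by simp
  also have "[p..<Suc q] = p # [apos w (Suc i)..<q] @ [q]"
    using pos le unfolding p_def by (simp add: upt_conv_Cons)
  finally have "map w [p..<p + length (x # (C @ [w 0]))] = x # (C @ [w 0])"
    using wp wq C by simp
  then show ?thesis unfolding factor_def C_def by metis
qed

lemma LSP_wd:
  assumes "LSP w" and H: "\<And>i. \<exists>k>i. w k = w 0"
  shows "LSP (wd w)"
  unfolding LSP_def
proof (intro allI impI)
  fix u assume "left_special u (wd w)"
  then obtain x y where xy: "x \<noteq> y" and fx: "factor (x # u) (wd w)" and fy: "factor (y # u) (wd w)"
    unfolding left_special_def by blast
  obtain i where xi: "x # u = map (wd w) [i..<i + length (x # u)]" using fx unfolding factor_def by (elim exE) simp
  obtain j where yj: "y # u = map (wd w) [j..<j + length (y # u)]" using fy unfolding factor_def by (elim exE) simp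
  define U where "U = concat (map (F w) u) @ [w 0]"
  have "left_special U w" unfolding left_special_def U_def
    using xy factor_lift[OF assms xi] factor_lift[OF assms yj] by blast
  then have "is_prefix U w" using assms(1) unfolding LSP_def by blast
  then have pre: "U = map w [0..<length U]" unfolding is_prefix_def .
  have "\<And>k. k < length (concat (map (F w) u)) + 1 \<Longrightarrow>
           w (apos w 0 + k) = (concat (map (F w) u) @ [w 0]) ! k"
  proof -
    fix k assume "k < length (concat (map (F w) u)) + 1"
    then have "k < length U" unfolding U_def by simp
    then have "U ! k = w k" using pre by (metis add_0 diff_zero length_map length_upt nth_map nth_upt)
    then show "w (apos w 0 + k) = (concat (map (F w) u) @ [w 0]) ! k" unfolding U_def by simp
  qed
  then have "u = map (wd w) [0..<0 + length u]" by (rule prefix_lemma[OF assms])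
  then show "is_prefix u (wd w)" unfolding is_prefix_def by simp
qed

lemma step:
  assumes "finite A" "inf_word_over A w" "LSP w"
  shows "\<exists>f v. f \<in> S_bLSP A \<and> inf_word_over A v \<and> LSP v \<and> inf_image f v w"
proof -
  have H: "\<And>i. \<exists>k>i. w k = w 0" using inf_alpha[OF assms] by blast
  have "inf_word_over A (wd w)" using assms(2) unfolding inf_word_over_def wd_def by blast
  then show ?thesis using F_S[OF assms(2,3)] LSP_wd[OF assms(3) H] inf_image_wd[OF assms(3) H] by blast
qed

theorem proposition1:
  fixes A :: "'a set" and w :: "nat \<Rightarrow> 'a"
  assumes "finite A" and "inf_word_over A w" and "LSP w"
  shows "S_adic A (S_bLSP A) w"
proof -
  define P where "P v \<longleftrightarrow> inf_word_over A v \<and> LSP v" for v :: "nat \<Rightarrow> 'a"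
  have "\<forall>v. \<exists>g. P v \<longrightarrow> (fst g \<in> S_bLSP A \<and> P (snd g) \<and> inf_image (fst g) (snd g) v)"
    using step[OF assms(1)] unfolding P_def by fastforce
  then obtain g where g: "\<And>v. P v \<Longrightarrow> fst (g v) \<in> S_bLSP A \<and> P (snd (g v)) \<and> inf_image (fst (g v)) (snd (g v)) v"
    by metis
  define ws where "ws n = ((snd \<circ> g) ^^ n) w" for n
  define fs where "fs n = fst (g (ws n))" for n
  have Pws: "P (ws n)" for n
  proof (induction n)
    case 0
    then show ?case using assms unfolding P_def ws_def by simp
  next
    case (Suc n)
    then show ?case using g unfolding ws_def by simp
  qed
  have wsS: "ws (Suc n) = snd (g (ws n))" for n unfolding ws_def by simp
  show ?thesis unfolding S_adic_def
  proof (intro exI conjI allI)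
    show "ws 0 = w" unfolding ws_def by simp
    fix n
    show "fs n \<in> S_bLSP A" using g[OF Pws[of n]] unfolding fs_def by blast
    show "inf_word_over A (ws n)" using Pws[of n] unfolding P_def by blast
    show "inf_image (fs n) (ws (Suc n)) (ws n)" using g[OF Pws[of n]] unfolding fs_def wsS by blast
  qed
qed

end
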